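(* Let $\mu \in \mathbb{R}$, $\sigma > 0$, $t \in \mathbb{R}$ and $y \in \mathbb{R}$, and let $\Phi_{\mu,\sigma^2}$ denote the CDF of the Gaussian distribution $\mathcal{N}(\mu,\sigma^2)$. (i) For the weighting measure $\gamma_1$ with $\mathrm{d}\gamma_1(u) = \mathbb{1}\{t \leq u\}\,\mathrm{d}\lambda(u)$, $$\mathrm{CRPS}_{\gamma_1}(\Phi_{\mu,\sigma^2}, y) = \sigma\left[ -\tilde t\, \Phi(\tilde t)^2 + \tilde y^{t}\left(2\Phi(\tilde y^{t}) - 1\right) + \left(2\phi(\tilde y^{t}) - 2\phi(\tilde t)\Phi(\tilde t)\right) - \frac{1}{\sqrt{\pi}}\left(1 - \Phi(\tilde t\sqrt{2})\right)\right],$$ where $\tilde t = (t-\mu)/\sigma$ and $\tilde y^{t} = (\max(y,t) - \mu)/\sigma$. (ii) For $\sigma_\gamma > 0$ and the weighting measure $\gamma_2$ with $\mathrm{d}\gamma_2(u) = \frac{1}{\sigma_\gamma}\phi\!\left(\frac{u-t}{\sigma_\gamma}\right)\mathrm{d}\lambda(u)$, $$\mathrm{CRPS}_{\gamma_2}(\Phi_{\mu,\sigma^2}, y) = \Phi\!\left(\begin{pmatrix}0\\0\end{pmatrix}; \begin{pmatrix}\mu - t\\ \mu - t\end{pmatrix}, \begin{pmatrix}\sigma_\gamma^2 + \sigma^2 & \sigma_\gamma^2\\ \sigma_\gamma^2 & \sigma_\gamma^2+\sigma^2\end{pmatrix}\right) - 2\,\Phi\!\left(\begin{pmatrix}0\\0\end{pmatrix};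 \begin{pmatrix}\mu - t\\ y - t\end{pmatrix}, \begin{pmatrix}\sigma_\gamma^2 + \sigma^2 & \sigma_\gamma^2\\ \sigma_\gamma^2 & \sigma_\gamma^2\end{pmatrix}\right) + \Phi\!\left(\frac{t-y}{\sigma_\gamma}\right).$$
   Context: $\lambda$ is Lebesgue measure on $\mathbb{R}$; $\phi(v) = \frac{1}{\sqrt{2\pi}}e^{-v^2/2}$ and $\Phi$ are the standard normal density and CDF; $\Phi(\cdot;\boldsymbol{\mu},\boldsymbol{\Sigma})$ denotes the CDF of the bivariate Gaussian distribution with mean $\boldsymbol{\mu}\in\mathbb{R}^2$ and covariance $\boldsymbol{\Sigma}\in\mathbb{R}^{2\times 2}$ (evaluated at the given point). For a CDF $F$ on $\mathbb{R}$, a Borel measure $\gamma$ on $\mathbb{R}$, and $y\in\mathbb{R}$, the threshold-weighted CRPS is $\mathrm{CRPS}_\gamma(F,y) = \int_{-\infty}^{\infty}\left[F(u) - \mathbb{1}\{y\leq u\}\right]^2\,\mathrm{d}\gamma(u)$. *)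

theory Defs
  imports "HOL-Probability.Probability"
begin

definition gauss_cdf :: "real \<Rightarrow> real \<Rightarrow> real \<Rightarrow> real" where
  "gauss_cdf m s x = measure (density lborel (normal_density m s)) {..x}"

definition std_normal_cdf :: "real \<Rightarrow> real" where
  "std_normal_cdf x = measure (density lborel std_normal_density) {..x}"

definition bivariate_normal_density ::
    "real \<times> real \<Rightarrow> real \<times> real \<times> real \<Rightarrow> real \<times> real \<Rightarrow> real" where
  "bivariate_normal_density m S x =
     (let (m1, m2) = m; (s11, s12, s22) = S; (x1, x2) = x;
          d = s11 * s22 - s12^2;
          z1 = x1 - m1; z2 = x2 - m2;
          q = (s22 * z1^2 - 2 * s12 * z1 * z2 + s11 * z2^2) / d
      in exp (- q / 2) / (2 * pi * sqrt d))"

definition bivariate_normal_cdf ::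
    "real \<times> real \<Rightarrow> real \<times> real \<Rightarrow> real \<times> real \<times> real \<Rightarrow> real" where
  "bivariate_normal_cdf x m S =
     measure (density (lborel \<Otimes>\<^sub>M lborel) (bivariate_normal_density m S))
             ({..fst x} \<times> {..snd x})"

definition crps :: "real measure \<Rightarrow> (real \<Rightarrow> real) \<Rightarrow> real \<Rightarrow> real" where
  "crps \<gamma> F y = (\<integral>u. (F u - indicator {y..} u)^2 \<partial>\<gamma>)"

end

theory Submission
  imports Defs "HOL-Real_Asymp.Real_Asymp"
begin


lemma std_rd: "real_distribution (density lborel std_normal_density)"
proof -
  show ?thesis by (simp add: real_distribution_def real_distribution_axioms_def prob_space_normal_density)
qed

lemma Phi_cdf: "std_normal_cdf = cdf (density lborel std_normal_density)"
  by (simp add: fun_eq_iff std_normal_cdf_def cdf_def)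

lemma Phi_at_bot: "(std_normal_cdf \<longlongrightarrow> 0) at_bot"
  unfolding Phi_cdf by (rule finite_borel_measure.cdf_lim_at_bot) (rule real_distribution.finite_borel_measure_M[OF std_rd])

lemma Phi_at_top: "(std_normal_cdf \<longlongrightarrow> 1) at_top"
  unfolding Phi_cdf by (rule real_distribution.cdf_lim_at_top_prob[OF std_rd])

lemma Phi_nonneg: "0 \<le> std_normal_cdf x"
  unfolding std_normal_cdf_def by simp

lemma Phi_le1: "std_normal_cdf x \<le> 1"
  unfolding Phi_cdf by (rule real_distribution.cdf_bounded_prob[OF std_rd])

lemma emeasure_nd_Icc:
  assumes "a \<le> b" "s > 0"
  shows "emeasure (density lborel (normal_density m s)) {a..b} = ennreal (integral {a..b} (normal_density m s))"
proof -
  have c: "continuous_on {a..b} (normal_density m s)"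
    unfolding normal_density_def using assms by (intro continuous_intros) auto
  have "emeasure (density lborel (normal_density m s)) {a..b} = (\<integral>\<^sup>+x. ennreal (normal_density m s x) * indicator {a..b} x \<partial>lborel)"
    by (subst emeasure_density) auto
  also have "\<dots> = ennreal (integral {a..b} (normal_density m s))"
    by (rule nn_integral_has_integral_lebesgue') (auto intro!: integrable_integral integrable_continuous_interval c)
  finally show ?thesis .
qed

lemma measure_nd_point: "measure (density lborel (normal_density m s)) {a} = 0"
proof -
  have "emeasure (density lborel (normal_density m s)) {a} = (\<integral>\<^sup>+x. ennreal (normal_density m s x) * indicator {a} x \<partial>lborel)"
    by (subst emeasure_density) auto
  also have "\<dots> = 0"
    by (subst nn_integral_indicator_singleton) auto
  finally show ?thesis by (simp add: measure_def)
qed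


lemma nd_cont: "s > 0 \<Longrightarrow> continuous_on S (normal_density m s)"
  unfolding normal_density_def by (intro continuous_intros) auto

lemma G_prob: "s > 0 \<Longrightarrow> prob_space (density lborel (normal_density m s))"
  by (rule prob_space_normal_density)

lemma G_rd: "s > 0 \<Longrightarrow> real_distribution (density lborel (normal_density m s))"
  by (simp add: real_distribution_def real_distribution_axioms_def prob_space_normal_density)

lemma G_cdf: "gauss_cdf m s = cdf (density lborel (normal_density m s))"
  by (simp add: fun_eq_iff gauss_cdf_def cdf_def)

lemma G_at_bot: "s > 0 \<Longrightarrow> (gauss_cdf m s \<longlongrightarrow> 0) at_bot"
  unfolding G_cdf by (rule finite_borel_measure.cdf_lim_at_bot) (rule real_distribution.finite_borel_measure_M[OF G_rd])

lemma Phi_G: "std_normal_cdf = gauss_cdf 0 1"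
  by (simp add: fun_eq_iff gauss_cdf_def std_normal_cdf_def)

lemma G_diff:
  assumes "a \<le> b" "s > 0"
  shows "gauss_cdf m s b - gauss_cdf m s a = integral {a..b} (normal_density m s)"
proof -
  let ?M = "density lborel (normal_density m s)"
  interpret prob_space ?M by (rule G_prob) fact
  have 1: "{..b} = {..<a} \<union> {a..b}" using assms by auto
  have 2: "{..a} = {..<a} \<union> {a}" by auto
  have "measure ?M {..b} = measure ?M {..<a} + measure ?M {a..b}"
    unfolding 1 by (rule finite_measure_Union) auto
  moreover have "measure ?M {..a} = measure ?M {..<a} + measure ?M {a}"
    unfolding 2 by (rule finite_measure_Union) auto
  moreover have "measure ?M {a..b} = integral {a..b} (normal_density m s)"
    unfolding measure_def using emeasure_nd_Icc[OF assms]
    by (simp add: integral_nonneg[OF integrable_continuous_interval[OF nd_cont[OF assms(2)]]])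
  ultimately show ?thesis unfolding gauss_cdf_def using measure_nd_point[of m s a] by simp
qed

lemma G_deriv:
  assumes "s > 0"
  shows "(gauss_cdf m s has_real_derivative normal_density m s x) (at x)"
proof -
  have c: "continuous_on {x-1..x+1} (normal_density m s)"
    by (rule nd_cont) fact
  have d: "((\<lambda>u. gauss_cdf m s (x-1) + integral {x-1..u} (normal_density m s)) has_real_derivative 0 + normal_density m s x) (at x within {x-1..x+1})"
    by (rule DERIV_add[OF DERIV_const integral_has_real_derivative[OF c]]) auto
  have d2: "((\<lambda>u. gauss_cdf m s (x-1) + integral {x-1..u} (normal_density m s)) has_real_derivative normal_density m s x) (at x)"
  proof -
    have "((\<lambda>u. gauss_cdf m s (x-1) + integral {x-1..u} (normal_density m s)) has_real_derivative normal_density m s x) (at x within {x-1<..<x+1})"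
      by (rule has_field_derivative_subset[OF d[simplified]]) auto
    moreover have "at x within {x-1<..<x+1} = at x" by (rule at_within_open) auto
    ultimately show ?thesis by simp
  qed
  show ?thesis
    apply (rule has_field_derivative_transform_within_open[OF d2, of "{x-1<..<x+1}"])
  proof -
    fix u assume "u \<in> {x-1<..<x+1}"
    then have "x - 1 \<le> u" by simp
    from G_diff[OF this assms, of m] show "gauss_cdf m s (x-1) + integral {x-1..u} (normal_density m s) = gauss_cdf m s u"
      by linarith
  qed auto
qed

lemma Phi_deriv: "(std_normal_cdf has_real_derivative std_normal_density x) (at x)"
  unfolding Phi_G by (rule G_deriv) simp

lemma Phi_deriv_chain:
  assumes "(f has_real_derivative f') (at x within S)"
  shows "((\<lambda>x. std_normal_cdf (f x)) has_real_derivative std_normal_density (f x) * f') (at x within S)"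
  using DERIV_chain2[OF Phi_deriv assms] .

lemma nd_std: "s > 0 \<Longrightarrow> normal_density m s x = std_normal_density ((x - m) / s) / s"
  unfolding normal_density_def by (simp add: real_sqrt_mult power_divide)

lemma G_Phi:
  assumes "s > 0"
  shows "gauss_cdf m s x = std_normal_cdf ((x - m) / s)"
proof -
  define h where "h u = gauss_cdf m s u - std_normal_cdf ((u - m) / s)" for u
  have dh: "(h has_real_derivative 0) (at u)" for u
  proof -
    have "(h has_real_derivative (normal_density m s u - std_normal_density ((u - m) / s) * (1 / s))) (at u)"
      unfolding h_def
      using assms by (intro DERIV_diff G_deriv Phi_deriv_chain assms derivative_eq_intros) auto
    then show ?thesis using nd_std[OF assms, of m u] by simp
  qed
  have hc: "h u = h v" for u v
    by (rule DERIV_isconst_all) (use dh in auto)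
  have lim: "(h \<longlongrightarrow> 0 - 0) at_bot"
  proof -
    have "filterlim (\<lambda>u. (u - m) / s) at_bot at_bot"
      using assms by real_asymp
    then have "((\<lambda>u. std_normal_cdf ((u - m) / s)) \<longlongrightarrow> 0) at_bot"
      using Phi_at_bot filterlim_compose by blast
    then show ?thesis unfolding h_def by (intro tendsto_diff G_at_bot assms)
  qed
  have "h = (\<lambda>_. h x)" using hc by auto
  then have "(h \<longlongrightarrow> h x) at_bot" by (metis tendsto_const)
  then have "h x = 0" using lim tendsto_unique[OF trivial_limit_at_bot_linorder] by fastforce
  then show ?thesis unfolding h_def by simp
qed

lemma Phi_cont: "isCont std_normal_cdf x"
  using Phi_deriv DERIV_isCont by blast

lemma Phi_sym: "std_normal_cdf (- x) = 1 - std_normal_cdf x"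
proof -
  define h where "h u = std_normal_cdf (- u) + std_normal_cdf u" for u
  have dh: "(h has_real_derivative 0) (at u)" for u
  proof -
    have "(h has_real_derivative (std_normal_density (-u) * (-1) + std_normal_density u)) (at u)"
      unfolding h_def
      by (intro DERIV_add Phi_deriv Phi_deriv_chain derivative_eq_intros) auto
    then show ?thesis by (simp add: std_normal_density_def)
  qed
  have hc: "h u = h v" for u v
    by (rule DERIV_isconst_all) (use dh in auto)
  have lim: "(h \<longlongrightarrow> 0 + 1) at_top"
  proof -
    have "((\<lambda>u. std_normal_cdf (- u)) \<longlongrightarrow> 0) at_top"
      using Phi_at_bot filterlim_compose filterlim_uminus_at_bot_at_top by blast
    then show ?thesis unfolding h_def by (intro tendsto_add Phi_at_top)
  qed
  have "h = (\<lambda>_. h x)" using hc by auto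
  then have "(h \<longlongrightarrow> h x) at_top" by (metis tendsto_const)
  then have "h x = 1" using lim tendsto_unique[OF trivial_limit_at_top_linorder] by fastforce
  then show ?thesis unfolding h_def by simp
qed



lemma phi_deriv: "(std_normal_density has_real_derivative (- z * std_normal_density z)) (at z)"
  unfolding std_normal_density_def
  by (auto intro!: derivative_eq_intros simp: field_simps)

lemma phi_deriv_chain:
  assumes "(f has_real_derivative f') (at x within S)"
  shows "((\<lambda>x. std_normal_density (f x)) has_real_derivative (- f x * std_normal_density (f x)) * f') (at x within S)"
  using DERIV_chain2[OF phi_deriv assms] .

lemma phi_sq: "2 * std_normal_density z * std_normal_density z = 1 / sqrt pi * (std_normal_density (z * sqrt 2) * sqrt 2)"
proof -
  have e: "exp (- z\<^sup>2 / 2) * exp (- z\<^sup>2 / 2) = exp (- (z * sqrt 2)\<^sup>2 / 2)"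
    unfolding mult_exp_exp by (simp add: power_mult_distrib)
  have "2 * std_normal_density z * std_normal_density z = 2 / (2 * pi) * (exp (- z\<^sup>2 / 2) * exp (- z\<^sup>2 / 2))"
    by (simp add: std_normal_density_def)
  also have "\<dots> = 1 / sqrt pi * (1 / sqrt (2 * pi) * exp (- (z * sqrt 2)\<^sup>2 / 2) * sqrt 2)"
    unfolding e by (simp add: real_sqrt_mult field_simps)
  finally show ?thesis by (simp add: std_normal_density_def)
qed

lemma Phi_deriv_eq:
  assumes "(f has_real_derivative f') (at x within S)" "D = std_normal_density (f x) * f'"
  shows "((\<lambda>x. std_normal_cdf (f x)) has_real_derivative D) (at x within S)"
  using Phi_deriv_chain[OF assms(1)] assms(2) by simp

lemma phi_deriv_eq:
  assumes "(f has_real_derivative f') (at x within S)" "D = - f x * std_normal_density (f x) * f'"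
  shows "((\<lambda>x. std_normal_density (f x)) has_real_derivative D) (at x within S)"
  using phi_deriv_chain[OF assms(1)] assms(2) by simp

declare Phi_deriv_chain[derivative_intros] phi_deriv_chain[derivative_intros]

definition HH :: "real \<Rightarrow> real" where
  "HH z = z * (std_normal_cdf z)\<^sup>2 + 2 * std_normal_density z * std_normal_cdf z - 1 / sqrt pi * std_normal_cdf (z * sqrt 2)"

definition KK :: "real \<Rightarrow> real" where
  "KK z = z * (std_normal_cdf (- z))\<^sup>2 - 2 * std_normal_density z * std_normal_cdf (- z) + 1 / sqrt pi * std_normal_cdf (- z * sqrt 2)"

lemma HH_deriv: "(HH has_real_derivative (std_normal_cdf z)\<^sup>2) (at z)"
proof -
  have "(HH has_real_derivative
     (1 * (std_normal_cdf z)\<^sup>2 + z * (2 * std_normal_cdf z * std_normal_density z)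
      + (2 * (- z * std_normal_density z * 1) * std_normal_cdf z + 2 * std_normal_density z * std_normal_density z)
      - 1 / sqrt pi * (std_normal_density (z * sqrt 2) * sqrt 2))) (at z)"
    unfolding HH_def [abs_def]
    by (rule derivative_eq_intros refl | simp)+
  then show ?thesis using phi_sq[of z] by (simp add: algebra_simps)
qed

lemma KK_deriv: "(KK has_real_derivative (std_normal_cdf (- z))\<^sup>2) (at z)"
proof -
  have "(KK has_real_derivative
     (1 * (std_normal_cdf (-z))\<^sup>2 + z * (2 * std_normal_cdf (-z) * (std_normal_density (-z) * (-1))))
      - (2 * (- z * std_normal_density z * 1) * std_normal_cdf (-z) + 2 * std_normal_density z * (std_normal_density (-z) * (-1)))
      + 1 / sqrt pi * (std_normal_density (-z * sqrt 2) * (- sqrt 2))) (at z)"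
    unfolding KK_def [abs_def]
    by (rule derivative_eq_intros refl | simp)+
  moreover have "std_normal_density (-z) = std_normal_density z" "std_normal_density (-z * sqrt 2) = std_normal_density (z * sqrt 2)"
    by (simp_all add: std_normal_density_def)
  ultimately show ?thesis using phi_sq[of z] by (simp add: algebra_simps)
qed


lemma phi_at_top: "(std_normal_density \<longlongrightarrow> 0) at_top"
  unfolding std_normal_density_def by real_asymp

lemma Phi_neg_at_top: "((\<lambda>z. std_normal_cdf (- z)) \<longlongrightarrow> 0) at_top"
  using Phi_at_bot filterlim_compose filterlim_uminus_at_bot_at_top by blast

lemma Phi_lin_at_top:
  assumes "c > 0"
  shows "((\<lambda>z. std_normal_cdf (- z * c)) \<longlongrightarrow> 0) at_top"
proof -
  have "filterlim (\<lambda>z. - z * c) at_bot at_top" using assms by real_asymp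
  then show ?thesis using Phi_at_bot filterlim_compose by blast
qed

lemma mills:
  assumes "z > 0"
  shows "std_normal_cdf (- z) \<le> std_normal_density z / z"
proof -
  define D where "D x = std_normal_density x / x - std_normal_cdf (- x)" for x
  have dD: "(D has_real_derivative - std_normal_density x / x\<^sup>2) (at x)" if "x > 0" for x
  proof -
    have "(D has_real_derivative ((- x * std_normal_density x * 1) * x - std_normal_density x * 1) / (x * x)
            - std_normal_density (-x) * (-1)) (at x)"
      unfolding D_def[abs_def] using that
      by (auto intro!: derivative_eq_intros)
    moreover have "std_normal_density (-x) = std_normal_density x" by (simp add: std_normal_density_def)
    ultimately show ?thesis using that by (simp add: field_simps power2_eq_square)
  qed
  have mono: "D b \<le> D z" if "z \<le> b" for b
  proof (rule DERIV_nonpos_imp_nonincreasing[OF that])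
    fix x assume "z \<le> x" "x \<le> b"
    then have "x > 0" using assms by simp
    then show "\<exists>y. (D has_real_derivative y) (at x) \<and> y \<le> 0"
      by (intro exI[of _ "- std_normal_density x / x\<^sup>2"] conjI dD) (auto simp: normal_density_nonneg)
  qed
  have lim: "(D \<longlongrightarrow> 0 - 0) at_top"
    unfolding D_def
    by (intro tendsto_diff Phi_neg_at_top) (unfold std_normal_density_def, real_asymp)
  have "0 \<le> D z"
    apply (rule tendsto_upperbound[OF lim[simplified]])
    using mono by (auto simp: eventually_at_top_linorder)
  then show ?thesis unfolding D_def by simp
qed

lemma KK_at_top: "(KK \<longlongrightarrow> 0) at_top"
proof -
  have a: "((\<lambda>z. z * (std_normal_cdf (- z))\<^sup>2) \<longlongrightarrow> 0) at_top"
  proof (rule tendsto_sandwich[of "\<lambda>_. 0" _ _ "\<lambda>z. std_normal_density z * std_normal_cdf (- z)"])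
    show "\<forall>\<^sub>F n in at_top. 0 \<le> n * (std_normal_cdf (- n))\<^sup>2"
      by (auto simp: eventually_at_top_linorder intro!: exI[of _ 0])
    show "\<forall>\<^sub>F n in at_top. n * (std_normal_cdf (- n))\<^sup>2 \<le> std_normal_density n * std_normal_cdf (- n)"
    proof (auto simp: eventually_at_top_linorder intro!: exI[of _ 1])
      fix n :: real assume "1 \<le> n"
      then have "n * std_normal_cdf (- n) \<le> std_normal_density n" using mills[of n] by (simp add: field_simps)
      then have "n * std_normal_cdf (- n) * std_normal_cdf (- n) \<le> std_normal_density n * std_normal_cdf (- n)"
        by (rule mult_right_mono) (rule Phi_nonneg)
      then show "n * (std_normal_cdf (- n))\<^sup>2 \<le> std_normal_density n * std_normal_cdf (- n)"
        by (simp add: power2_eq_square mult.assoc)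
    qed
    show "((\<lambda>z. std_normal_density z * std_normal_cdf (- z)) \<longlongrightarrow> 0) at_top"
      using tendsto_mult[OF phi_at_top Phi_neg_at_top] by simp
  qed simp
  have "(KK \<longlongrightarrow> 0 - 2 * 0 * 0 + 1 / sqrt pi * 0) at_top"
    unfolding KK_def[abs_def]
    by (intro tendsto_intros a phi_at_top Phi_neg_at_top Phi_lin_at_top) auto
  then show ?thesis by simp
qed



lemma Phi_meas[measurable]: "std_normal_cdf \<in> borel_measurable borel"
  by (rule borel_measurable_continuous_onI) (intro continuous_at_imp_continuous_on ballI Phi_cont)

lemma isCont_at_right: "isCont f x \<Longrightarrow> (f \<longlongrightarrow> f x) (at_right x)"
  for f :: "real \<Rightarrow> real" by (metis filterlim_at_split isCont_def)

lemma isCont_at_left: "isCont f x \<Longrightarrow> (f \<longlongrightarrow> f x) (at_left x)"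
  for f :: "real \<Rightarrow> real" by (metis filterlim_at_split isCont_def)

lemma lin_deriv: "((\<lambda>u. (u - m) / c) has_real_derivative 1 / c) (at u within S)"
  using DERIV_cdivide[OF DERIV_diff[OF DERIV_ident DERIV_const]] by simp

lemma part1:
  fixes \<mu> \<sigma> t y :: real
  assumes sp: "\<sigma> > 0"
  shows "crps (density lborel (\<lambda>u. indicator {t..} u)) (gauss_cdf \<mu> \<sigma>) y =
     \<sigma> * (HH ((max y t - \<mu>) / \<sigma>) - HH ((t - \<mu>) / \<sigma>)) - \<sigma> * KK ((max y t - \<mu>) / \<sigma>)"
proof -
  define s where "s = max y t"
  have ts: "t \<le> s" "y \<le> s" unfolding s_def by auto
  define F where "F u = std_normal_cdf ((u - \<mu>) / \<sigma>)" for u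
  have gF: "gauss_cdf \<mu> \<sigma> = F" using G_Phi[OF sp] by (auto simp: F_def fun_eq_iff)
  have Fm[measurable]: "F \<in> borel_measurable borel" unfolding F_def[abs_def] by measurable
  have Fd: "(F has_real_derivative std_normal_density ((u - \<mu>) / \<sigma>) * (1 / \<sigma>)) (at u)" for u
    unfolding F_def[abs_def] by (rule Phi_deriv_chain lin_deriv)+
  have Fc: "isCont F u" for u using Fd DERIV_isCont by blast
  define f where "f u = (F u - indicator {y..} u)\<^sup>2" for u
  have fm[measurable]: "f \<in> borel_measurable borel" unfolding f_def[abs_def] by measurable
  have c1: "crps (density lborel (\<lambda>u. indicator {t..} u)) (gauss_cdf \<mu> \<sigma>) y = (LINT u:{t..}|lborel. f u)"
  proof -
    have dens: "(\<lambda>u. indicator {t..} u :: ennreal) = (\<lambda>u. ennreal (indicator {t..} u))"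
      by (auto simp: fun_eq_iff indicator_def)
    show ?thesis
      unfolding crps_def gF dens set_lebesgue_integral_def f_def
      by (subst integral_density) auto
  qed
  define G1 where "G1 u = \<sigma> * HH ((u - \<mu>) / \<sigma>)" for u
  define G2 where "G2 u = \<sigma> * KK ((u - \<mu>) / \<sigma>)" for u
  have G1d: "(G1 has_real_derivative (F u)\<^sup>2) (at u)" for u
  proof -
    have "(G1 has_real_derivative \<sigma> * ((F u)\<^sup>2 * (1 / \<sigma>))) (at u)"
      unfolding G1_def[abs_def] F_def
      by (intro DERIV_cmult DERIV_chain2[OF HH_deriv] lin_deriv)
    then show ?thesis using sp by simp
  qed
  have G2d: "(G2 has_real_derivative (1 - F u)\<^sup>2) (at u)" for u
  proof -
    have "(G2 has_real_derivative \<sigma> * ((std_normal_cdf (- ((u - \<mu>) / \<sigma>)))\<^sup>2 * (1 / \<sigma>))) (at u)"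
      unfolding G2_def[abs_def]
      by (intro DERIV_cmult DERIV_chain2[OF KK_deriv] lin_deriv)
    then show ?thesis using sp by (simp add: Phi_sym F_def)
  qed
  have G1c: "isCont G1 u" for u using G1d DERIV_isCont by blast
  have G2c: "isCont G2 u" for u using G2d DERIV_isCont by blast
  have P1: "set_integrable lborel {t<..<s} f \<and> (LINT u:{t<..<s}|lborel. f u) = G1 s - G1 t"
  proof (cases "t < s")
    case True
    have ftc: "set_integrable lborel (einterval t s) (\<lambda>u. (F u)\<^sup>2) \<and> (LBINT u=ereal t..ereal s. (F u)\<^sup>2) = G1 s - G1 t"
      by (intro conjI interval_integral_FTC_nonneg[where F=G1])
         (use True G1d Fc G1c in \<open>auto simp: ereal_tendsto_simps intro!: isCont_at_right isCont_at_left\<close>)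
    have eqf: "u \<in> {t<..<s} \<Longrightarrow> f u = (F u)\<^sup>2" for u
      using ts unfolding f_def s_def by (auto simp: indicator_def)
    have "(LINT u:{t<..<s}|lborel. f u) = (LINT u:{t<..<s}|lborel. (F u)\<^sup>2)"
      by (rule set_lebesgue_integral_cong) (auto simp: eqf)
    moreover have "set_integrable lborel {t<..<s} f = set_integrable lborel {t<..<s} (\<lambda>u. (F u)\<^sup>2)"
      by (rule set_integrable_cong) (auto simp: eqf)
    ultimately show ?thesis
      using ftc True
      by (auto simp: interval_lebesgue_integral_def)
  next
    case False
    then show ?thesis using ts by (auto simp: set_lebesgue_integral_def set_integrable_def)
  qed
  have P2: "set_integrable lborel {s<..} f \<and> (LINT u:{s<..}|lborel. f u) = 0 - G2 s"
  proof -
    have lim: "(G2 \<longlongrightarrow> \<sigma> * 0) at_top"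
    proof -
      have "filterlim (\<lambda>u. (u - \<mu>) / \<sigma>) at_top at_top" using sp by real_asymp
      then have "((\<lambda>u. KK ((u - \<mu>) / \<sigma>)) \<longlongrightarrow> 0) at_top" using KK_at_top filterlim_compose by blast
      then show ?thesis unfolding G2_def by (intro tendsto_mult tendsto_const)
    qed
    have ftc: "set_integrable lborel (einterval s \<infinity>) (\<lambda>u. (1 - F u)\<^sup>2) \<and> (LBINT u=ereal s..\<infinity>. (1 - F u)\<^sup>2) = 0 - G2 s"
      by (intro conjI interval_integral_FTC_nonneg[where F=G2])
         (use G2d Fc G2c lim in \<open>auto simp: ereal_tendsto_simps intro!: isCont_at_right\<close>)
    have eqf: "u \<in> {s<..} \<Longrightarrow> f u = (1 - F u)\<^sup>2" for u
      using ts unfolding f_def s_def by (auto simp: indicator_def power2_commute)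
    have "(LINT u:{s<..}|lborel. f u) = (LINT u:{s<..}|lborel. (1 - F u)\<^sup>2)"
      by (rule set_lebesgue_integral_cong) (auto simp: eqf)
    moreover have "set_integrable lborel {s<..} f = set_integrable lborel {s<..} (\<lambda>u. (1 - F u)\<^sup>2)"
      by (rule set_integrable_cong) (auto simp: eqf)
    ultimately show ?thesis
      using ftc
      by (auto simp: interval_lebesgue_integral_def)
  qed
  have "(LINT u:{t..}|lborel. f u) = (LINT u:({t<..<s} \<union> {s<..})|lborel. f u)"
  proof (rule set_integral_cong_set)
    show "AE x in lborel. (x \<in> {t<..<s} \<union> {s<..}) = (x \<in> {t..})"
      using AE_lborel_singleton[of t] AE_lborel_singleton[of s]
      by eventually_elim (use ts in auto)
  qed (unfold set_borel_measurable_def; measurable)+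
  also have "\<dots> = (LINT u:{t<..<s}|lborel. f u) + (LINT u:{s<..}|lborel. f u)"
    by (rule set_integral_Un) (use P1 P2 in auto)
  finally show ?thesis using c1 P1 P2 unfolding G1_def G2_def s_def by (simp add: right_diff_distrib)
qed

lemma part1_final:
  fixes \<mu> \<sigma> t y :: real
  assumes sp: "\<sigma> > 0"
  shows "crps (density lborel (\<lambda>u. indicator {t..} u)) (gauss_cdf \<mu> \<sigma>) y =
           (let tt = (t - \<mu>) / \<sigma>; yt = (max y t - \<mu>) / \<sigma> in
            \<sigma> * ( - tt * (std_normal_cdf tt)^2
                  + yt * (2 * std_normal_cdf yt - 1)
                  + (2 * std_normal_density yt - 2 * std_normal_density tt * std_normal_cdf tt)
                  - 1 / sqrt pi * (1 - std_normal_cdf (tt * sqrt 2))))"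
proof -
  define tt where "tt = (t - \<mu>) / \<sigma>"
  define yt where "yt = (max y t - \<mu>) / \<sigma>"
  have "HH yt - HH tt - KK yt = - tt * (std_normal_cdf tt)^2
                  + yt * (2 * std_normal_cdf yt - 1)
                  + (2 * std_normal_density yt - 2 * std_normal_density tt * std_normal_cdf tt)
                  - 1 / sqrt pi * (1 - std_normal_cdf (tt * sqrt 2))"
    unfolding HH_def KK_def
    by (simp add: Phi_sym algebra_simps power2_eq_square diff_divide_distrib add_divide_distrib)
  then show ?thesis using part1[OF sp, of t \<mu> y] unfolding Let_def tt_def[symmetric] yt_def[symmetric]
    by (simp add: right_diff_distrib[symmetric])
qed



lemma nd_alt: "s > 0 \<Longrightarrow> normal_density m s x = exp (- (x - m)\<^sup>2 / (2 * s\<^sup>2)) / (sqrt (2 * pi) * s)"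
  unfolding normal_density_def by (simp add: real_sqrt_mult)

lemma sqrt2pi: "sqrt (2 * pi) * sqrt (2 * pi) = 2 * pi"
  by simp

lemma bvn2_eq:
  assumes a: "a > 0" and b: "b > 0"
  shows "bivariate_normal_density (m1, m2) (a\<^sup>2 + b\<^sup>2, a\<^sup>2, a\<^sup>2) (z1, z2) =
         normal_density m2 a z2 * normal_density (m1 - m2 + z2) b z1"
proof -
  have d: "sqrt ((a\<^sup>2 + b\<^sup>2) * a\<^sup>2 - (a\<^sup>2)\<^sup>2) = a * b"
  proof -
    have "(a\<^sup>2 + b\<^sup>2) * a\<^sup>2 - (a\<^sup>2)\<^sup>2 = (a * b)\<^sup>2" by (simp add: algebra_simps power2_eq_square)
    then show ?thesis using a b by simp
  qed
  define X where "X = - (z2 - m2)\<^sup>2 / (2 * a\<^sup>2)"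
  define Y where "Y = - (z1 - (m1 - m2 + z2))\<^sup>2 / (2 * b\<^sup>2)"
  have ex: "- (((a\<^sup>2) * (z1 - m1)\<^sup>2 - 2 * a\<^sup>2 * (z1 - m1) * (z2 - m2) + (a\<^sup>2 + b\<^sup>2) * (z2 - m2)\<^sup>2) / ((a\<^sup>2 + b\<^sup>2) * a\<^sup>2 - (a\<^sup>2)\<^sup>2)) / 2
      = X + Y"
    unfolding X_def Y_def using a b by (simp add: field_simps power2_eq_square)
  have l: "bivariate_normal_density (m1, m2) (a\<^sup>2 + b\<^sup>2, a\<^sup>2, a\<^sup>2) (z1, z2) = exp X * exp Y / (2 * pi * (a * b))"
    unfolding bivariate_normal_density_def Let_def
    apply (simp only: case_prod_conv)
    apply (subst d)
    apply (subst ex)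
    by (simp add: exp_add)
  have r1: "normal_density m2 a z2 = exp X / (sqrt (2 * pi) * a)" unfolding X_def using a by (simp add: nd_alt)
  have r2: "normal_density (m1 - m2 + z2) b z1 = exp Y / (sqrt (2 * pi) * b)" unfolding Y_def using b by (simp add: nd_alt)
  have alg: "p * q / (2 * pi * (a * b)) = p / (sqrt (2 * pi) * a) * (q / (sqrt (2 * pi) * b))" for p q
    using a b by (simp add: field_simps)
  show ?thesis unfolding l r1 r2 alg ..
qed

lemma ex_alg:
  fixes A B :: real
  assumes "A > 0" "B > 0"
  shows "- v\<^sup>2 / (2 * A) + - (z1 - (m + v))\<^sup>2 / (2 * B) + - (z2 - (m + v))\<^sup>2 / (2 * B) =
      - (((A + B) * (z1 - m)\<^sup>2 - 2 * A * (z1 - m) * (z2 - m) + (A + B) * (z2 - m)\<^sup>2) / ((A + B) * (A + B) - A\<^sup>2)) / 2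
      + - (v - A * (z1 + z2 - 2 * m) / (2 * A + B))\<^sup>2 / (2 * (A * B / (2 * A + B)))"
proof -
  define D where "D = 2 * A + B"
  have D: "D > 0" "D \<noteq> 0" using assms unfolding D_def by auto
  have d: "(A + B) * (A + B) - A\<^sup>2 = B * D" unfolding D_def by (simp add: algebra_simps power2_eq_square)
  have r: "(v - A * (z1 + z2 - 2 * m) / D)\<^sup>2 / (2 * (A * B / D)) = (D * v - A * (z1 + z2 - 2 * m))\<^sup>2 / (2 * A * B * D)"
    using assms D by (simp add: field_simps power2_eq_square)
  show ?thesis unfolding d D_def[symmetric] r using assms D
    apply (simp add: field_simps)
    unfolding D_def power2_eq_square by (simp add: algebra_simps)
qed

lemma bvn1_eq:
  assumes a: "a > 0" and b: "b > 0"
  defines "e \<equiv> sqrt (2 * a\<^sup>2 + b\<^sup>2)"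
  shows "normal_density 0 a v * normal_density (m + v) b z1 * normal_density (m + v) b z2 =
         bivariate_normal_density (m, m) (a\<^sup>2 + b\<^sup>2, a\<^sup>2, a\<^sup>2 + b\<^sup>2) (z1, z2) *
         normal_density (a\<^sup>2 * (z1 + z2 - 2 * m) / e\<^sup>2) (a * b / e) v"
proof -
  have e: "e > 0" "e\<^sup>2 = 2 * a\<^sup>2 + b\<^sup>2" unfolding e_def using a b by (auto intro: add_pos_nonneg)
  have d: "sqrt ((a\<^sup>2 + b\<^sup>2) * (a\<^sup>2 + b\<^sup>2) - (a\<^sup>2)\<^sup>2) = b * e"
  proof -
    have "(a\<^sup>2 + b\<^sup>2) * (a\<^sup>2 + b\<^sup>2) - (a\<^sup>2)\<^sup>2 = (b * e)\<^sup>2" using e by (simp add: algebra_simps power2_eq_square)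
    then show ?thesis using e b by simp
  qed
  define X1 where "X1 = - v\<^sup>2 / (2 * a\<^sup>2)"
  define X2 where "X2 = - (z1 - (m + v))\<^sup>2 / (2 * b\<^sup>2)"
  define X3 where "X3 = - (z2 - (m + v))\<^sup>2 / (2 * b\<^sup>2)"
  define Q where "Q = - (((a\<^sup>2 + b\<^sup>2) * (z1 - m)\<^sup>2 - 2 * a\<^sup>2 * (z1 - m) * (z2 - m) + (a\<^sup>2 + b\<^sup>2) * (z2 - m)\<^sup>2) / ((a\<^sup>2 + b\<^sup>2) * (a\<^sup>2 + b\<^sup>2) - (a\<^sup>2)\<^sup>2)) / 2"
  define K where "K = - (v - a\<^sup>2 * (z1 + z2 - 2 * m) / e\<^sup>2)\<^sup>2 / (2 * (a * b / e)\<^sup>2)"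
  have ex: "X1 + X2 + X3 = Q + K"
  proof -
    have t: "(a * b / e)\<^sup>2 = a\<^sup>2 * b\<^sup>2 / (2 * a\<^sup>2 + b\<^sup>2)" using e by (simp add: power_divide power_mult_distrib)
    show ?thesis unfolding X1_def X2_def X3_def Q_def K_def t e(2) using ex_alg[of "a\<^sup>2" "b\<^sup>2" v z1 m z2] a b by simp
  qed
  have ee: "exp X1 * exp X2 * exp X3 = exp Q * exp K" by (simp add: exp_add[symmetric] ex)
  have r0: "normal_density 0 a v = exp X1 / (sqrt (2 * pi) * a)" unfolding X1_def using a by (simp add: nd_alt)
  have r1: "normal_density (m + v) b z1 = exp X2 / (sqrt (2 * pi) * b)" unfolding X2_def using b by (simp add: nd_alt)
  have r2: "normal_density (m + v) b z2 = exp X3 / (sqrt (2 * pi) * b)" unfolding X3_def using b by (simp add: nd_alt)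
  have r3: "normal_density (a\<^sup>2 * (z1 + z2 - 2 * m) / e\<^sup>2) (a * b / e) v = exp K / (sqrt (2 * pi) * (a * b / e))"
    unfolding K_def using a b e by (subst nd_alt) auto
  have l: "bivariate_normal_density (m, m) (a\<^sup>2 + b\<^sup>2, a\<^sup>2, a\<^sup>2 + b\<^sup>2) (z1, z2) = exp Q / (2 * pi * (b * e))"
    unfolding bivariate_normal_density_def Let_def
    apply (simp only: case_prod_conv)
    apply (subst d)
    unfolding Q_def ..
  have alg: "p / (sqrt (2 * pi) * a) * (q / (sqrt (2 * pi) * b)) * (r / (sqrt (2 * pi) * b)) =
     P / (2 * pi * (b * e)) * (R / (sqrt (2 * pi) * (a * b / e)))" if "p * q * r = P * R" for p q r P R
  proof -
    have "p / (sqrt (2 * pi) * a) * (q / (sqrt (2 * pi) * b)) * (r / (sqrt (2 * pi) * b)) = (p * q * r) / (sqrt (2 * pi) * sqrt (2 * pi) * sqrt (2 * pi) * a * b * b)"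
      by (simp add: field_simps)
    also have "\<dots> = (P * R) / (2 * pi * sqrt (2 * pi) * a * b * b)" unfolding that sqrt2pi ..
    also have "\<dots> = P / (2 * pi * (b * e)) * (R / (sqrt (2 * pi) * (a * b / e)))"
      using a b e by (simp add: field_simps)
    finally show ?thesis .
  qed
  show ?thesis unfolding l r0 r1 r2 r3 by (rule alg[OF ee])
qed



lemma nn_total: "s > 0 \<Longrightarrow> (\<integral>\<^sup>+ z. ennreal (normal_density m s z) \<partial>lborel) = 1"
  by (subst nn_integral_eq_integral) auto

lemma nn_cdf:
  assumes "s > 0"
  shows "(\<integral>\<^sup>+ z. ennreal (normal_density m s z) * indicator {..c} z \<partial>lborel) = ennreal (std_normal_cdf ((c - m) / s))"
proof -
  interpret prob_space "density lborel (normal_density m s)" by (rule G_prob) fact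
  have "(\<integral>\<^sup>+ z. ennreal (normal_density m s z) * indicator {..c} z \<partial>lborel) = emeasure (density lborel (normal_density m s)) {..c}"
    by (subst emeasure_density) auto
  also have "\<dots> = ennreal (gauss_cdf m s c)"
    unfolding gauss_cdf_def by (rule emeasure_eq_measure)
  finally show ?thesis using G_Phi[OF assms] by simp
qed

lemma nn_cdf':
  assumes "s > 0"
  shows "(\<integral>\<^sup>+ z. ennreal (normal_density m s z * indicator {..c} z) \<partial>lborel) = ennreal (std_normal_cdf ((c - m) / s))"
  using nn_cdf[OF assms] by (simp add: ennreal_mult' ennreal_indicator)

lemma nd_refl: "normal_density m s (c - z) = normal_density (c - m) s z"
  unfolding normal_density_def by (simp add: power2_eq_square algebra_simps)

lemma partC:
  assumes a: "a > 0"
  shows "(\<integral>\<^sup>+ u. ennreal (normal_density t a u * indicator {y..} u) \<partial>lborel) = ennreal (std_normal_cdf ((t - y) / a))"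
proof -
  have "(\<integral>\<^sup>+ u. ennreal (normal_density t a u * indicator {y..} u) \<partial>lborel) =
        ennreal \<bar>-1\<bar> * (\<integral>\<^sup>+ x. ennreal (normal_density t a (y + -1 * x) * indicator {y..} (y + -1 * x)) \<partial>lborel)"
    by (rule nn_integral_real_affine) auto
  also have "\<dots> = (\<integral>\<^sup>+ x. ennreal (normal_density (y - t) a x * indicator {..0} x) \<partial>lborel)"
    using nd_refl[of t a y, symmetric] by (simp add: indicator_def)
  also have "\<dots> = ennreal (std_normal_cdf ((t - y) / a))"
    using nn_cdf'[OF a] by simp
  finally show ?thesis .
qed

lemma partB:
  fixes \<mu> t y a b :: real
  assumes a: "a > 0" and b: "b > 0"
  shows "emeasure (density (lborel \<Otimes>\<^sub>M lborel) (bivariate_normal_density (\<mu> - t, y - t) (a\<^sup>2 + b\<^sup>2, a\<^sup>2, a\<^sup>2))) ({..0} \<times> {..0})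
    = (\<integral>\<^sup>+ u. ennreal (normal_density t a u * std_normal_cdf ((u - \<mu>) / b) * indicator {y..} u) \<partial>lborel)"
proof -
  define h where "h p = normal_density (y - t) a (snd p) * normal_density (\<mu> - t - (y - t) + snd p) b (fst p)" for p :: "real \<times> real"
  have heq: "(\<lambda>x. ennreal (bivariate_normal_density (\<mu> - t, y - t) (a\<^sup>2 + b\<^sup>2, a\<^sup>2, a\<^sup>2) x)) = (\<lambda>p. ennreal (h p))"
    by (auto simp: fun_eq_iff h_def bvn2_eq[OF a b])
  have hm[measurable]: "h \<in> borel_measurable (lborel \<Otimes>\<^sub>M lborel)"
    unfolding h_def[abs_def] normal_density_def by measurable
  have "emeasure (density (lborel \<Otimes>\<^sub>M lborel) (bivariate_normal_density (\<mu> - t, y - t) (a\<^sup>2 + b\<^sup>2, a\<^sup>2, a\<^sup>2))) ({..0} \<times> {..0})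
      = (\<integral>\<^sup>+ p. ennreal (h p) * indicator ({..0} \<times> {..0}) p \<partial>(lborel \<Otimes>\<^sub>M lborel))"
    unfolding heq by (subst emeasure_density) auto
  also have "\<dots> = (\<integral>\<^sup>+ z2. (\<integral>\<^sup>+ z1. ennreal (h (z1, z2)) * indicator ({..0} \<times> {..0}) (z1, z2) \<partial>lborel) \<partial>lborel)"
    by (rule lborel_pair.nn_integral_snd[symmetric]) measurable
  also have "\<dots> = (\<integral>\<^sup>+ z2. ennreal (normal_density (y - t) a z2 * indicator {..0} z2 * std_normal_cdf ((0 - (\<mu> - t - (y - t) + z2)) / b)) \<partial>lborel)"
  proof (rule nn_integral_cong)
    fix z2 :: real
    have "(\<integral>\<^sup>+ z1. ennreal (h (z1, z2)) * indicator ({..0} \<times> {..0}) (z1, z2) \<partial>lborel)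
       = (\<integral>\<^sup>+ z1. ennreal (normal_density (y - t) a z2 * indicator {..0} z2) * (ennreal (normal_density (\<mu> - t - (y - t) + z2) b z1) * indicator {..0} z1) \<partial>lborel)"
      by (intro nn_integral_cong) (auto simp: h_def indicator_def ennreal_mult')
    also have "\<dots> = ennreal (normal_density (y - t) a z2 * indicator {..0} z2) * (\<integral>\<^sup>+ z1. ennreal (normal_density (\<mu> - t - (y - t) + z2) b z1) * indicator {..0} z1 \<partial>lborel)"
      by (rule nn_integral_cmult) measurable
    also have "\<dots> = ennreal (normal_density (y - t) a z2 * indicator {..0} z2 * std_normal_cdf ((0 - (\<mu> - t - (y - t) + z2)) / b))"
      by (simp add: nn_cdf[OF b] ennreal_mult'[symmetric] Phi_nonneg)
    finally show "(\<integral>\<^sup>+ z1. ennreal (h (z1, z2)) * indicator ({..0} \<times> {..0}) (z1, z2) \<partial>lborel) = \<dots>" .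
  qed
  also have "\<dots> = ennreal \<bar>-1\<bar> * (\<integral>\<^sup>+ u. ennreal (normal_density (y - t) a (y + -1 * u) * indicator {..0} (y + -1 * u) * std_normal_cdf ((0 - (\<mu> - t - (y - t) + (y + -1 * u))) / b)) \<partial>lborel)"
    by (rule nn_integral_real_affine) auto
  also have "\<dots> = (\<integral>\<^sup>+ u. ennreal (normal_density t a u * std_normal_cdf ((u - \<mu>) / b) * indicator {y..} u) \<partial>lborel)"
  proof -
    have "normal_density (y - t) a (y + -1 * u) = normal_density t a u" for u
      using nd_refl[of "y - t" a y u] by simp
    moreover have "(0 - (\<mu> - t - (y - t) + (y + -1 * u))) = u - \<mu>" for u by simp
    ultimately show ?thesis by (simp add: indicator_def mult_ac)
  qed
  finally show ?thesis .
qed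

lemma partA:
  fixes \<mu> t a b :: real
  assumes a: "a > 0" and b: "b > 0"
  shows "emeasure (density (lborel \<Otimes>\<^sub>M lborel) (bivariate_normal_density (\<mu> - t, \<mu> - t) (a\<^sup>2 + b\<^sup>2, a\<^sup>2, a\<^sup>2 + b\<^sup>2))) ({..0} \<times> {..0})
    = (\<integral>\<^sup>+ u. ennreal (normal_density t a u * (std_normal_cdf ((u - \<mu>) / b))\<^sup>2) \<partial>lborel)"
proof -
  define m where "m = \<mu> - t"
  define e where "e = sqrt (2 * a\<^sup>2 + b\<^sup>2)"
  have e: "e > 0" unfolding e_def using a b by (auto intro: add_pos_nonneg)
  define B where "B p = bivariate_normal_density (m, m) (a\<^sup>2 + b\<^sup>2, a\<^sup>2, a\<^sup>2 + b\<^sup>2) p" for p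
  define k where "k p v = normal_density 0 a v * normal_density (m + v) b (fst p) * normal_density (m + v) b (snd p)" for p :: "real \<times> real" and v
  have km[measurable]: "case_prod k \<in> borel_measurable ((lborel \<Otimes>\<^sub>M lborel) \<Otimes>\<^sub>M lborel)"
    unfolding k_def[abs_def] normal_density_def by measurable
  have Bm[measurable]: "B \<in> borel_measurable (lborel \<Otimes>\<^sub>M lborel)"
    unfolding B_def[abs_def] bivariate_normal_density_def Let_def by measurable
  have Bk: "ennreal (B p) = (\<integral>\<^sup>+ v. ennreal (k p v) \<partial>lborel)" for p
  proof -
    obtain z1 z2 where p: "p = (z1, z2)" by (cases p)
    have "(\<integral>\<^sup>+ v. ennreal (k p v) \<partial>lborel) = (\<integral>\<^sup>+ v. ennreal (B p) * ennreal (normal_density (a\<^sup>2 * (z1 + z2 - 2 * m) / e\<^sup>2) (a * b / e) v) \<partial>lborel)"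
      unfolding k_def B_def p e_def using bvn1_eq[OF a b, of v m z1 z2 for v]
      by (intro nn_integral_cong) (simp add: ennreal_mult'')
    also have "\<dots> = ennreal (B p) * (\<integral>\<^sup>+ v. ennreal (normal_density (a\<^sup>2 * (z1 + z2 - 2 * m) / e\<^sup>2) (a * b / e) v) \<partial>lborel)"
      by (rule nn_integral_cmult) measurable
    also have "\<dots> = ennreal (B p)" using a b e by (simp add: nn_total)
    finally show ?thesis ..
  qed
  interpret P3: pair_sigma_finite "lborel \<Otimes>\<^sub>M lborel :: (real \<times> real) measure" "lborel :: real measure"
    by (simp add: pair_sigma_finite_def sigma_finite_pair_measure sigma_finite_lborel)
  have "emeasure (density (lborel \<Otimes>\<^sub>M lborel) B) ({..0} \<times> {..0})
      = (\<integral>\<^sup>+ p. ennreal (B p) * indicator ({..0} \<times> {..0}) p \<partial>(lborel \<Otimes>\<^sub>M lborel))"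
    by (subst emeasure_density) auto
  also have "\<dots> = (\<integral>\<^sup>+ p. (\<integral>\<^sup>+ v. ennreal (k p v) * indicator ({..0} \<times> {..0}) p \<partial>lborel) \<partial>(lborel \<Otimes>\<^sub>M lborel))"
    unfolding Bk by (intro nn_integral_cong nn_integral_multc[symmetric]) measurable
  also have "\<dots> = (\<integral>\<^sup>+ v. (\<integral>\<^sup>+ p. ennreal (k p v) * indicator ({..0} \<times> {..0}) p \<partial>(lborel \<Otimes>\<^sub>M lborel)) \<partial>lborel)"
    by (rule P3.Fubini'[symmetric]) measurable
  also have "\<dots> = (\<integral>\<^sup>+ v. ennreal (normal_density 0 a v * (std_normal_cdf ((0 - (m + v)) / b))\<^sup>2) \<partial>lborel)"
  proof (rule nn_integral_cong)
    fix v :: real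
    let ?c = "std_normal_cdf ((0 - (m + v)) / b)"
    have "(\<integral>\<^sup>+ p. ennreal (k p v) * indicator ({..0} \<times> {..0}) p \<partial>(lborel \<Otimes>\<^sub>M lborel))
        = (\<integral>\<^sup>+ z1. (\<integral>\<^sup>+ z2. ennreal (k (z1, z2) v) * indicator ({..0} \<times> {..0}) (z1, z2) \<partial>lborel) \<partial>lborel)"
      by (rule lborel.nn_integral_fst[symmetric]) measurable
    also have "\<dots> = (\<integral>\<^sup>+ z1. ennreal (normal_density 0 a v * ?c) * (ennreal (normal_density (m + v) b z1) * indicator {..0} z1) \<partial>lborel)"
    proof (rule nn_integral_cong)
      fix z1 :: real
      have "(\<integral>\<^sup>+ z2. ennreal (k (z1, z2) v) * indicator ({..0} \<times> {..0}) (z1, z2) \<partial>lborel)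
         = (\<integral>\<^sup>+ z2. ennreal (normal_density 0 a v * normal_density (m + v) b z1 * indicator {..0} z1) * (ennreal (normal_density (m + v) b z2) * indicator {..0} z2) \<partial>lborel)"
        by (intro nn_integral_cong) (auto simp: k_def indicator_def ennreal_mult')
      also have "\<dots> = ennreal (normal_density 0 a v * normal_density (m + v) b z1 * indicator {..0} z1) * (\<integral>\<^sup>+ z2. ennreal (normal_density (m + v) b z2) * indicator {..0} z2 \<partial>lborel)"
        by (rule nn_integral_cmult) measurable
      also have "\<dots> = ennreal (normal_density 0 a v * ?c) * (ennreal (normal_density (m + v) b z1) * indicator {..0} z1)"
        by (subst nn_cdf[OF b]) (simp add: ennreal_mult'[symmetric] Phi_nonneg indicator_def)
      finally show "(\<integral>\<^sup>+ z2. ennreal (k (z1, z2) v) * indicator ({..0} \<times> {..0}) (z1, z2) \<partial>lborel) = \<dots>" .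
    qed
    also have "\<dots> = ennreal (normal_density 0 a v * ?c) * (\<integral>\<^sup>+ z1. ennreal (normal_density (m + v) b z1) * indicator {..0} z1 \<partial>lborel)"
      by (rule nn_integral_cmult) measurable
    also have "\<dots> = ennreal (normal_density 0 a v * ?c\<^sup>2)"
      by (subst nn_cdf[OF b]) (simp add: ennreal_mult'[symmetric] Phi_nonneg power2_eq_square mult_ac)
    finally show "(\<integral>\<^sup>+ p. ennreal (k p v) * indicator ({..0} \<times> {..0}) p \<partial>(lborel \<Otimes>\<^sub>M lborel)) = \<dots>" .
  qed
  also have "\<dots> = ennreal \<bar>-1\<bar> * (\<integral>\<^sup>+ u. ennreal (normal_density 0 a (t + -1 * u) * (std_normal_cdf ((0 - (m + (t + -1 * u))) / b))\<^sup>2) \<partial>lborel)"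
    by (rule nn_integral_real_affine) auto
  also have "\<dots> = (\<integral>\<^sup>+ u. ennreal (normal_density t a u * (std_normal_cdf ((u - \<mu>) / b))\<^sup>2) \<partial>lborel)"
  proof -
    have eq1: "normal_density 0 a (t + -1 * u) = normal_density t a u" for u
      using nd_refl[of 0 a t u] by simp
    have eq2: "(0 - (m + (t + -1 * u))) = u - \<mu>" for u by (simp add: m_def)
    show ?thesis unfolding eq1 eq2 by simp
  qed
  finally show ?thesis unfolding B_def[abs_def] m_def .
qed



lemma int_to_nn:
  assumes "f \<in> borel_measurable lborel" "\<And>x. 0 \<le> f x"
  shows "integral\<^sup>L lborel f = enn2real (\<integral>\<^sup>+ x. ennreal (f x) \<partial>lborel)"
  by (rule integral_eq_nn_integral) (use assms in auto)

lemma part2: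
  fixes \<mu> \<sigma> t y \<sigma>\<gamma> :: real
  assumes sp: "\<sigma> > 0" and gp: "\<sigma>\<gamma> > 0"
  shows "crps (density lborel (\<lambda>u. 1 / \<sigma>\<gamma> * std_normal_density ((u - t) / \<sigma>\<gamma>)))
              (gauss_cdf \<mu> \<sigma>) y =
           bivariate_normal_cdf (0, 0) (\<mu> - t, \<mu> - t) (\<sigma>\<gamma>^2 + \<sigma>^2, \<sigma>\<gamma>^2, \<sigma>\<gamma>^2 + \<sigma>^2)
           - 2 * bivariate_normal_cdf (0, 0) (\<mu> - t, y - t) (\<sigma>\<gamma>^2 + \<sigma>^2, \<sigma>\<gamma>^2, \<sigma>\<gamma>^2)
           + std_normal_cdf ((t - y) / \<sigma>\<gamma>)"
proof -
  define F where "F u = std_normal_cdf ((u - \<mu>) / \<sigma>)" for u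
  have gF: "gauss_cdf \<mu> \<sigma> = F" using G_Phi[OF sp] by (auto simp: F_def fun_eq_iff)
  have Fm[measurable]: "F \<in> borel_measurable borel" unfolding F_def[abs_def] by measurable
  define N where "N u = normal_density t \<sigma>\<gamma> u" for u
  have Nm[measurable]: "N \<in> borel_measurable borel" unfolding N_def[abs_def] by measurable
  have Nint: "integrable lborel N" unfolding N_def[abs_def] by (rule integrable_normal_density) (rule gp)
  have N0: "0 \<le> N u" for u unfolding N_def by simp
  have F0: "0 \<le> F u" "F u \<le> 1" for u unfolding F_def by (simp_all add: Phi_nonneg Phi_le1)
  have dens: "(\<lambda>u. ennreal (1 / \<sigma>\<gamma> * std_normal_density ((u - t) / \<sigma>\<gamma>))) = (\<lambda>u. ennreal (N u))"
    unfolding N_def using nd_std[OF gp, of t] by (simp add: fun_eq_iff)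
  define I where "I u = (indicator {y..} u :: real)" for u
  have Im[measurable]: "I \<in> borel_measurable borel" unfolding I_def[abs_def] by measurable
  have c1: "crps (density lborel (\<lambda>u. 1 / \<sigma>\<gamma> * std_normal_density ((u - t) / \<sigma>\<gamma>))) (gauss_cdf \<mu> \<sigma>) y
      = (\<integral>u. N u * (F u - I u)\<^sup>2 \<partial>lborel)"
    unfolding crps_def gF dens I_def by (subst integral_density) (auto simp: N0)
  have pw: "N u * (F u - I u)\<^sup>2 = N u * (F u)\<^sup>2 - 2 * (N u * F u * I u) + N u * I u" for u
    by (simp add: I_def indicator_def power2_eq_square algebra_simps)
  have bnd: "integrable lborel g" if "g \<in> borel_measurable lborel" "\<And>u. \<bar>g u\<bar> \<le> N u" for g
    by (rule Bochner_Integration.integrable_bound[OF Nint]) (use that N0 in auto)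
  have i1: "integrable lborel (\<lambda>u. N u * (F u)\<^sup>2)"
    by (rule bnd) (use N0 F0 in \<open>auto simp: abs_mult intro!: mult_left_le power_le_one\<close>)
  have i2: "integrable lborel (\<lambda>u. N u * F u * I u)"
    by (rule bnd) (use N0 F0 in \<open>auto simp: abs_mult I_def indicator_def intro!: mult_left_le\<close>)
  have i3: "integrable lborel (\<lambda>u. N u * I u)"
    by (rule bnd) (use N0 in \<open>auto simp: abs_mult I_def indicator_def\<close>)
  have split: "(\<integral>u. N u * (F u - I u)\<^sup>2 \<partial>lborel) =
      (\<integral>u. N u * (F u)\<^sup>2 \<partial>lborel) - 2 * (\<integral>u. N u * F u * I u \<partial>lborel) + (\<integral>u. N u * I u \<partial>lborel)"
    unfolding pw using i1 i2 i3 by simp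
  have A: "(\<integral>u. N u * (F u)\<^sup>2 \<partial>lborel) = bivariate_normal_cdf (0, 0) (\<mu> - t, \<mu> - t) (\<sigma>\<gamma>^2 + \<sigma>^2, \<sigma>\<gamma>^2, \<sigma>\<gamma>^2 + \<sigma>^2)"
    unfolding bivariate_normal_cdf_def measure_def fst_conv snd_conv partA[OF gp sp]
    by (subst int_to_nn) (auto simp: N_def F_def N0)
  have B: "(\<integral>u. N u * F u * I u \<partial>lborel) = bivariate_normal_cdf (0, 0) (\<mu> - t, y - t) (\<sigma>\<gamma>^2 + \<sigma>^2, \<sigma>\<gamma>^2, \<sigma>\<gamma>^2)"
    unfolding bivariate_normal_cdf_def measure_def fst_conv snd_conv partB[OF gp sp]
    by (subst int_to_nn) (auto simp: N_def F_def I_def Phi_nonneg)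
  have C: "(\<integral>u. N u * I u \<partial>lborel) = std_normal_cdf ((t - y) / \<sigma>\<gamma>)"
    by (subst int_to_nn) (auto simp: N_def I_def partC[OF gp] Phi_nonneg)
  show ?thesis unfolding c1 split A B C ..
qed

theorem theorem1:
  fixes \<mu> \<sigma> t y \<sigma>\<gamma> :: real
  assumes "\<sigma> > 0"
  shows "(crps (density lborel (\<lambda>u. indicator {t..} u)) (gauss_cdf \<mu> \<sigma>) y =
           (let tt = (t - \<mu>) / \<sigma>; yt = (max y t - \<mu>) / \<sigma> in
            \<sigma> * ( - tt * (std_normal_cdf tt)^2
                  + yt * (2 * std_normal_cdf yt - 1)
                  + (2 * std_normal_density yt - 2 * std_normal_density tt * std_normal_cdf tt)
                  - 1 / sqrt pi * (1 - std_normal_cdf (tt * sqrt 2)))))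
    \<and> (\<sigma>\<gamma> > 0 \<longrightarrow>
         crps (density lborel (\<lambda>u. 1 / \<sigma>\<gamma> * std_normal_density ((u - t) / \<sigma>\<gamma>)))
              (gauss_cdf \<mu> \<sigma>) y =
           bivariate_normal_cdf (0, 0) (\<mu> - t, \<mu> - t) (\<sigma>\<gamma>^2 + \<sigma>^2, \<sigma>\<gamma>^2, \<sigma>\<gamma>^2 + \<sigma>^2)
           - 2 * bivariate_normal_cdf (0, 0) (\<mu> - t, y - t) (\<sigma>\<gamma>^2 + \<sigma>^2, \<sigma>\<gamma>^2, \<sigma>\<gamma>^2)
           + std_normal_cdf ((t - y) / \<sigma>\<gamma>))"
  using part1_final[OF assms] part2[OF assms] by blast

end
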